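(* There is an absolute constant $C>0$ such that for every $h\in\mathbb N$ and every $P\in\mathcal C(h)$ all of whose holes are axis-aligned rectangles, $\varrho(P)\le C$.
   Context: For $h\in\mathbb N$, $\mathcal C(h)$ denotes the family of polygonal domains $P=P_0\setminus\bigcup_{i=1}^h \operatorname{int}(P_i)$, where $P_0$ is a convex polygon in the plane and $P_1,\dots,P_h$ (the holes) are pairwise disjoint convex polygons contained in the interior of $P_0$. For $s,t\in P$, ${\rm geod}(s,t)$ is the infimum of the Euclidean lengths of polygonal paths from $s$ to $t$ contained in $P$; ${\rm diam}_2(P)=\sup_{s,t\in P}|st|$, ${\rm diam}_g(P)=\sup_{s,t\in P}{\rm geod}(s,t)$, and $\varrho(P)={\rm diam}_g(P)/{\rm diam}_2(P)$. *)

theory Defs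
  imports "HOL-Analysis.Analysis"
begin

type_synonym pt = "real ^ 2"

definition convex_polygon :: "pt set \<Rightarrow> bool" where
  "convex_polygon S \<longleftrightarrow> (\<exists>V. finite V \<and> S = convex hull V) \<and> interior S \<noteq> {}"

definition axis_rectangle :: "pt set \<Rightarrow> bool" where
  "axis_rectangle S \<longleftrightarrow> (\<exists>a b. a$1 < b$1 \<and> a$2 < b$2 \<and> S = cbox a b)"

definition polygonal_domain :: "pt set \<Rightarrow> nat \<Rightarrow> (nat \<Rightarrow> pt set) \<Rightarrow> pt set" where
  "polygonal_domain P0 h H = P0 - (\<Union>i\<in>{1..h}. interior (H i))"

definition in_class_C :: "nat \<Rightarrow> pt set \<Rightarrow> (nat \<Rightarrow> pt set) \<Rightarrow> bool" where
  "in_class_C h P0 H \<longleftrightarrow> convex_polygon P0 \<and>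
     (\<forall>i\<in>{1..h}. convex_polygon (H i) \<and> H i \<subseteq> interior P0) \<and>
     (\<forall>i\<in>{1..h}. \<forall>j\<in>{1..h}. i \<noteq> j \<longrightarrow> H i \<inter> H j = {})"

definition polygonal_path :: "pt set \<Rightarrow> pt \<Rightarrow> pt \<Rightarrow> pt list \<Rightarrow> bool" where
  "polygonal_path P s t ps \<longleftrightarrow> ps \<noteq> [] \<and> hd ps = s \<and> last ps = t \<and>
     (\<forall>i < length ps - 1. closed_segment (ps ! i) (ps ! Suc i) \<subseteq> P)"

definition path_len :: "pt list \<Rightarrow> real" where
  "path_len ps = (\<Sum>i < length ps - 1. dist (ps ! i) (ps ! Suc i))"

definition geod :: "pt set \<Rightarrow> pt \<Rightarrow> pt \<Rightarrow> real" where
  "geod P s t = Inf {path_len ps | ps. polygonal_path P s t ps}"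

definition diam2 :: "pt set \<Rightarrow> real" where
  "diam2 P = Sup {dist s t | s t. s \<in> P \<and> t \<in> P}"

definition diamg :: "pt set \<Rightarrow> real" where
  "diamg P = Sup {geod P s t | s t. s \<in> P \<and> t \<in> P}"

definition rho :: "pt set \<Rightarrow> real" where
  "rho P = diamg P / diam2 P"

end

theory Submission
  imports Defs
begin


lemma pp_single: "polygonal_path P s t [x] \<longleftrightarrow> s = x \<and> t = x"
  by (auto simp: polygonal_path_def)

lemma pp_cons: "polygonal_path P s t (x # y # zs) \<longleftrightarrow>
   s = x \<and> closed_segment x y \<subseteq> P \<and> polygonal_path P y t (y # zs)"
proof -
  have "(\<forall>i < length (x#y#zs) - 1. closed_segment ((x#y#zs) ! i) ((x#y#zs) ! Suc i) \<subseteq> P)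
     \<longleftrightarrow> closed_segment x y \<subseteq> P \<and> (\<forall>i < length (y#zs) - 1. closed_segment ((y#zs) ! i) ((y#zs) ! Suc i) \<subseteq> P)"
    by (simp only: length_Cons diff_Suc_1 All_less_Suc2 nth_Cons_0 nth_Cons_Suc)
  then show ?thesis by (auto simp: polygonal_path_def)
qed

lemma len_single: "path_len [x] = 0"
  by (simp add: path_len_def)

lemma len_cons: "path_len (x # y # zs) = dist x y + path_len (y # zs)"
proof -
  have "length (x # y # zs) - 1 = Suc (length (y#zs) - 1)" by simp
  then show ?thesis unfolding path_len_def
    by (simp only: sum.lessThan_Suc_shift nth_Cons_0 nth_Cons_Suc)
qed

lemma pp_nonempty: "polygonal_path P s t xs \<Longrightarrow> xs \<noteq> []"
  by (simp add: polygonal_path_def)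

lemma pp_append:
  "polygonal_path P a b xs \<Longrightarrow> polygonal_path P b c ys \<Longrightarrow>
   polygonal_path P a c (xs @ tl ys) \<and> path_len (xs @ tl ys) = path_len xs + path_len ys"
proof (induction xs arbitrary: a)
  case Nil then show ?case by (simp add: polygonal_path_def)
next
  case (Cons x xs)
  show ?case
  proof (cases xs)
    case Nil
    with Cons.prems have "a = x" "b = x" by (auto simp: pp_single)
    moreover obtain y ys' where "ys = y # ys'" using Cons.prems(2) by (cases ys) (auto simp: polygonal_path_def)
    moreover have "y = b" using Cons.prems(2) \<open>ys = y # ys'\<close> by (simp add: polygonal_path_def)
    ultimately show ?thesis using Nil Cons.prems by (simp add: len_single)
  next
    case (Cons y zs)
    with Cons.prems(1) have h: "a = x" "closed_segment x y \<subseteq> P" "polygonal_path P y b (y # zs)"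
      by (auto simp: pp_cons)
    from Cons.IH[OF h(3)[folded Cons] Cons.prems(2)] Cons show ?thesis
      using h by (simp add: pp_cons len_cons)
  qed
qed

lemma pp_seg: "closed_segment x y \<subseteq> P \<Longrightarrow> polygonal_path P x y [x, y] \<and> path_len [x,y] = dist x y"
  by (simp add: pp_cons pp_single len_cons len_single)

lemma pp_rev:
  "polygonal_path P a b xs \<Longrightarrow> polygonal_path P b a (rev xs) \<and> path_len (rev xs) = path_len xs"
proof (induction xs arbitrary: a)
  case Nil then show ?case by (simp add: polygonal_path_def)
next
  case (Cons x xs)
  show ?case
  proof (cases xs)
    case Nil
    with Cons.prems show ?thesis by (simp add: pp_single)
  next
    case (Cons y zs)
    with Cons.prems(1) have h: "a = x" "closed_segment x y \<subseteq> P" "polygonal_path P y b (y # zs)"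
      by (auto simp: pp_cons)
    have ih: "polygonal_path P b y (rev (y#zs)) \<and> path_len (rev (y#zs)) = path_len (y#zs)"
      using Cons.IH[OF h(3)[folded Cons]] Cons by simp
    have "closed_segment y x \<subseteq> P" using h(2) by (simp add: closed_segment_commute)
    from pp_append[OF ih[THEN conjunct1] pp_seg[OF this, THEN conjunct1]] ih pp_seg[OF this]
    show ?thesis using Cons h by (simp add: len_cons dist_commute)
  qed
qed



definition mk :: "real \<Rightarrow> real \<Rightarrow> pt" where "mk x y = (\<chi> i. if i = 1 then x else y)"

lemma mk_1[simp]: "mk x y $ 1 = x" and mk_2[simp]: "mk x y $ 2 = y"
  by (simp_all add: mk_def)

lemma pt_eq: "(p::pt) = q \<longleftrightarrow> p$1 = q$1 \<and> p$2 = q$2"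
  by (simp add: vec_eq_iff forall_2)

lemma mk_eta: "mk (p$1) (p$2) = p"
  by (simp add: pt_eq)

lemma mk_lin: "mk x y = x *\<^sub>R axis 1 1 + y *\<^sub>R axis 2 1"
  by (simp add: pt_eq axis_def)

lemma cont_mk2: "continuous_on S (\<lambda>y. mk x y)"
  unfolding mk_lin by (intro continuous_intros)

lemma comp_le_dist: "\<bar>p$i - q$i\<bar> \<le> dist (p::pt) q"
  using component_le_norm_cart[of "p - q" i] by (simp add: dist_norm)

lemma dist_le_l1: "dist (p::pt) q \<le> \<bar>p$1 - q$1\<bar> + \<bar>p$2 - q$2\<bar>"
  using norm_le_l1_cart[of "p - q"] by (simp add: dist_norm sum_2)

lemma seg_comp:
  assumes "z \<in> closed_segment (p::pt) q"
  shows "\<exists>u. 0 \<le> u \<and> u \<le> 1 \<and> z$1 = (1-u) * p$1 + u * q$1 \<and> z$2 = (1-u) * p$2 + u * q$2"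
  using assms by (auto simp: closed_segment_def)

lemma seg_const:
  assumes "z \<in> closed_segment (p::pt) q" "p$i = c" "q$i = c"
  shows "z$i = c"
proof -
  obtain u where "z = (1-u) *\<^sub>R p + u *\<^sub>R q" using assms(1) by (auto simp: closed_segment_def)
  then have "z$i = (1-u) * p$i + u * q$i" by simp
  then show ?thesis using assms by (simp add: algebra_simps)
qed

lemma seg_between:
  assumes "z \<in> closed_segment (p::pt) q" "p$i \<le> q$i"
  shows "p$i \<le> z$i \<and> z$i \<le> q$i"
proof -
  obtain u where u: "0 \<le> u" "u \<le> 1" "z = (1-u) *\<^sub>R p + u *\<^sub>R q" using assms(1) by (auto simp: closed_segment_def)
  then have "z$i = (1-u) * p$i + u * q$i" by simp
  then have "z$i = p$i + u * (q$i - p$i)" by (simp add: algebra_simps)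
  moreover have "u * (q$i - p$i) \<le> 1 * (q$i - p$i)" using u assms(2) by (intro mult_right_mono) auto
  ultimately show ?thesis using u assms(2) by auto
qed

lemma vert_in_seg:
  assumes "p$1 = q$1" "p$2 \<le> y" "y \<le> q$2"
  shows "mk (p$1) y \<in> closed_segment (p::pt) q"
proof (cases "p$2 = q$2")
  case True
  then have "mk (p$1) y = p" using assms by (simp add: pt_eq)
  then show ?thesis by simp
next
  case False
  define u where "u = (y - p$2) / (q$2 - p$2)"
  have q: "q$2 - p$2 > 0" using False assms by auto
  have u01: "0 \<le> u" "u \<le> 1" using assms q by (auto simp: u_def divide_simps)
  have e1: "(1-u) * p$1 + u * q$1 = p$1" using assms by (simp add: algebra_simps)
  have "u * (q$2 - p$2) = y - p$2" using q by (simp add: u_def)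
  then have e2: "(1-u) * p$2 + u * q$2 = y" by (simp add: algebra_simps)
  have "mk (p$1) y = (1-u) *\<^sub>R p + u *\<^sub>R q"
    using e1 e2 by (simp add: pt_eq)
  then show ?thesis using u01 by (auto simp: closed_segment_def)
qed

lemma dist_vert: "dist (mk x y) (mk x y') = \<bar>y - y'\<bar>"
proof -
  have "dist (mk x y) (mk x y') \<le> \<bar>y - y'\<bar>" using dist_le_l1[of "mk x y" "mk x y'"] by simp
  moreover have "\<bar>y - y'\<bar> \<le> dist (mk x y) (mk x y')" using comp_le_dist[where p="mk x y" and q="mk x y'" and i=2] by simp
  ultimately show ?thesis by simp
qed

lemma dist_horiz: "dist (mk x y) (mk x' y) = \<bar>x - x'\<bar>"
proof -
  have "dist (mk x y) (mk x' y) \<le> \<bar>x - x'\<bar>" using dist_le_l1[of "mk x y" "mk x' y"] by simp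
  moreover have "\<bar>x - x'\<bar> \<le> dist (mk x y) (mk x' y)" using comp_le_dist[where p="mk x y" and q="mk x' y" and i=1] by simp
  ultimately show ?thesis by simp
qed



locale dom =
  fixes P0 :: "pt set" and I :: "nat set" and A B :: "nat \<Rightarrow> pt" and pl pr pT :: pt
  assumes finI: "finite I" and cpt: "compact P0" and cvx: "convex P0"
  and sub: "\<And>i. i\<in>I \<Longrightarrow> cbox (A i) (B i) \<subseteq> interior P0"
  and disj: "\<And>i j. i\<in>I \<Longrightarrow> j\<in>I \<Longrightarrow> i \<noteq> j \<Longrightarrow> cbox (A i) (B i) \<inter> cbox (A j) (B j) = {}"
  and AB1: "\<And>i. i\<in>I \<Longrightarrow> A i $1 < B i $1" and AB2: "\<And>i. i\<in>I \<Longrightarrow> A i $2 < B i $2"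
  and pl: "pl \<in> P0" "\<And>p. p\<in>P0 \<Longrightarrow> pl$1 \<le> p$1"
  and pr: "pr \<in> P0" "\<And>p. p\<in>P0 \<Longrightarrow> p$1 \<le> pr$1"
  and pT: "pT \<in> P0" "\<And>p. p\<in>P0 \<Longrightarrow> p$2 \<le> pT$2"
  and lr: "pl$1 < pr$1"
begin

definition PP where "PP = P0 - (\<Union>i\<in>I. box (A i) (B i))"
definition f where "f x = Sup {y. mk x y \<in> P0}"
definition u where "u x = mk x (f x)"
abbreviation "xl \<equiv> pl$1"
abbreviation "xr \<equiv> pr$1"

lemma P0_x: "p \<in> P0 \<Longrightarrow> p$1 \<in> {xl..xr}"
  using pl pr by auto

lemma col_ne: assumes "x \<in> {xl..xr}" shows "\<exists>y. mk x y \<in> P0"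
proof -
  define t where "t = (x - xl) / (xr - xl)"
  have t: "0 \<le> t" "t \<le> 1" using assms lr by (auto simp: t_def divide_simps)
  have q: "(1-t) *\<^sub>R pl + t *\<^sub>R pr \<in> P0" using convexD[OF cvx pl(1) pr(1)] t by auto
  have "t * (xr - xl) = x - xl" using lr by (simp add: t_def)
  then have "((1-t) *\<^sub>R pl + t *\<^sub>R pr) $ 1 = x" by (simp add: algebra_simps)
  then have "mk x (((1-t) *\<^sub>R pl + t *\<^sub>R pr) $ 2) = (1-t) *\<^sub>R pl + t *\<^sub>R pr"
    by (metis mk_eta)
  then show ?thesis using q by metis
qed

lemma col_bdd: "bdd_above {y. mk x y \<in> P0}"
  using pT(2) by (auto intro!: bdd_aboveI[where M="pT$2"] dest: pT(2))

lemma col_closed: "closed {y. mk x y \<in> P0}"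
proof -
  have "{y. mk x y \<in> P0} = (\<lambda>y. mk x y) -` P0" by auto
  moreover have "\<And>y. continuous (at y) (\<lambda>y. mk x y)" unfolding mk_lin by (intro continuous_intros)
  ultimately show ?thesis using continuous_closed_vimage compact_imp_closed[OF cpt] by metis
qed

lemma f_mem: "x \<in> {xl..xr} \<Longrightarrow> u x \<in> P0"
  using closed_contains_Sup[OF _ col_bdd col_closed, of x] col_ne[of x] by (auto simp: u_def f_def)

lemma f_ge: "mk x y \<in> P0 \<Longrightarrow> y \<le> f x"
  unfolding f_def by (rule cSup_upper) (auto simp: col_bdd)

lemma f_le_top: "x \<in> {xl..xr} \<Longrightarrow> f x \<le> pT$2"
  using f_mem[of x] pT(2) by (force simp: u_def)

lemma u_1[simp]: "u x $ 1 = x" and u_2[simp]: "u x $ 2 = f x" by (simp_all add: u_def)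

lemma u_not_int: assumes "x \<in> {xl..xr}" shows "u x \<notin> interior P0"
proof
  assume "u x \<in> interior P0"
  then obtain e where e: "e > 0" "ball (u x) e \<subseteq> P0" by (auto simp: mem_interior)
  have "dist (u x) (mk x (f x + e/2)) = e/2" unfolding u_def dist_vert using e by simp
  then have "mk x (f x + e/2) \<in> P0" using e by auto
  then have "f x + e/2 \<le> f x" by (rule f_ge)
  then show False using e by simp
qed

lemma box_int: "i \<in> I \<Longrightarrow> box (A i) (B i) \<subseteq> interior P0"
  using sub box_subset_cbox by blast

lemma u_PP: "x \<in> {xl..xr} \<Longrightarrow> u x \<in> PP"
  using f_mem u_not_int box_int unfolding PP_def by blast

lemma PP_P0: "PP \<subseteq> P0" by (auto simp: PP_def)

lemma f_concave:
  assumes "x \<in> {xl..xr}" "y \<in> {xl..xr}" "0 \<le> t" "t \<le> 1"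
  shows "(1-t) * f x + t * f y \<le> f ((1-t) * x + t * y)"
proof -
  have q: "(1-t) *\<^sub>R u x + t *\<^sub>R u y \<in> P0" using convexD[OF cvx f_mem[OF assms(1)] f_mem[OF assms(2)]] assms by auto
  have "mk ((1-t) * x + t * y) ((1-t) * f x + t * f y) = (1-t) *\<^sub>R u x + t *\<^sub>R u y"
    by (simp add: pt_eq)
  with q show ?thesis by (metis f_ge)
qed

lemma xT: "pT$1 \<in> {xl..xr}" using P0_x pT(1) by blast

lemma fT: "f (pT$1) = pT$2"
  using f_le_top[OF xT] f_ge[of "pT$1" "pT$2"] pT(1) by (simp add: mk_eta)

lemma uT: "u (pT$1) = pT" using fT by (simp add: pt_eq)

lemma f_between:
  assumes "x \<in> {xl..xr}" "w \<in> {xl..xr}" "f x \<le> f w" "(x \<le> y \<and> y \<le> w) \<or> (w \<le> y \<and> y \<le> x)"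
  shows "f x \<le> f y"
proof (cases "w = x")
  case True then show ?thesis using assms by auto
next
  case False
  define t where "t = (y - x) / (w - x)"
  have t: "0 \<le> t" "t \<le> 1" using assms False by (auto simp: t_def divide_simps)
  have "t * (w - x) = y - x" using False by (simp add: t_def)
  then have y: "(1-t) * x + t * w = y" by (simp add: algebra_simps)
  have "f x \<le> (1-t) * f x + t * f w" using assms(3) t by (simp add: algebra_simps mult_left_mono)
  also have "\<dots> \<le> f y" using f_concave[OF assms(1,2) t] y by simp
  finally show ?thesis .
qed

lemma f_mono_left: "xl \<le> x \<Longrightarrow> x \<le> y \<Longrightarrow> y \<le> pT$1 \<Longrightarrow> f x \<le> f y"
  using f_between[of x "pT$1" y] xT fT f_le_top[of x] by auto

lemma f_mono_right: "pT$1 \<le> x \<Longrightarrow> x \<le> y \<Longrightarrow> y \<le> xr \<Longrightarrow> f y \<le> f x"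
  using f_between[of y "pT$1" x] xT fT f_le_top[of y] by auto

end


context dom begin

lemma lsc_side:
  assumes x: "x \<in> {xl..xr}" and w: "w \<in> {xl..xr}" and "w \<noteq> x" and e: "e > 0"
  shows "\<exists>d>0. \<forall>y. ((x \<le> y \<and> y \<le> w) \<or> (w \<le> y \<and> y \<le> x)) \<longrightarrow> \<bar>y - x\<bar> < d \<longrightarrow> f x - e < f y"
proof -
  define M where "M = \<bar>f w - f x\<bar> + 1"
  have M: "M > 0" by (simp add: M_def)
  have wx: "\<bar>w - x\<bar> > 0" using assms by auto
  define d where "d = e * \<bar>w - x\<bar> / M"
  have d: "d > 0" using M wx e by (simp add: d_def)
  { fix y assume yb: "(x \<le> y \<and> y \<le> w) \<or> (w \<le> y \<and> y \<le> x)" and yd: "\<bar>y - x\<bar> < d"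
    define t where "t = (y - x) / (w - x)"
    have t: "0 \<le> t" "t \<le> 1" using yb \<open>w \<noteq> x\<close> by (auto simp: t_def divide_simps)
    have "t * (w - x) = y - x" using \<open>w \<noteq> x\<close> by (simp add: t_def)
    then have yeq: "(1-t) * x + t * w = y" by (simp add: algebra_simps)
    have "\<bar>t\<bar> = \<bar>y - x\<bar> / \<bar>w - x\<bar>" by (simp add: t_def abs_divide)
    then have ta: "t = \<bar>y - x\<bar> / \<bar>w - x\<bar>" using t by simp
    have "\<bar>y - x\<bar> / \<bar>w - x\<bar> < d / \<bar>w - x\<bar>" using yd wx by (rule divide_strict_right_mono)
    also have "d / \<bar>w - x\<bar> = e / M" using wx by (simp add: d_def)
    finally have "t < e / M" using ta by simp
    then have tM: "t * M < e" using M by (simp add: less_divide_eq)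
    have "- M \<le> f w - f x" unfolding M_def by linarith
    then have "t * (- M) \<le> t * (f w - f x)" using t by (intro mult_left_mono) auto
    then have "t * (f w - f x) \<ge> - (t * M)" by simp
    then have "f x - e < (1-t) * f x + t * f w" using tM by (simp add: algebra_simps)
    also have "\<dots> \<le> f y" using f_concave[OF x w t] yeq by simp
    finally have "f x - e < f y" . }
  then show ?thesis using d by blast
qed

lemma lsc:
  assumes x: "x \<in> {xl..xr}" and e: "e > 0"
  shows "\<exists>d>0. \<forall>y\<in>{xl..xr}. \<bar>y - x\<bar> < d \<longrightarrow> f x - e < f y"
proof -
  have "\<exists>d>0. \<forall>y\<in>{xl..xr}. x \<le> y \<longrightarrow> \<bar>y - x\<bar> < d \<longrightarrow> f x - e < f y"
  proof (cases "x = xr")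
    case True then show ?thesis using e by (intro exI[of _ 1]) auto
  next
    case False
    then obtain d where "d>0" "\<forall>y. ((x \<le> y \<and> y \<le> xr) \<or> (xr \<le> y \<and> y \<le> x)) \<longrightarrow> \<bar>y - x\<bar> < d \<longrightarrow> f x - e < f y"
      using lsc_side[OF x _ _ e, of xr] lr x by auto
    then show ?thesis by auto
  qed
  then obtain d1 where d1: "d1 > 0" "\<forall>y\<in>{xl..xr}. x \<le> y \<longrightarrow> \<bar>y - x\<bar> < d1 \<longrightarrow> f x - e < f y" by blast
  have "\<exists>d>0. \<forall>y\<in>{xl..xr}. y \<le> x \<longrightarrow> \<bar>y - x\<bar> < d \<longrightarrow> f x - e < f y"
  proof (cases "x = xl")
    case True then show ?thesis using e by (intro exI[of _ 1]) auto
  next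
    case False
    then obtain d where "d>0" "\<forall>y. ((x \<le> y \<and> y \<le> xl) \<or> (xl \<le> y \<and> y \<le> x)) \<longrightarrow> \<bar>y - x\<bar> < d \<longrightarrow> f x - e < f y"
      using lsc_side[OF x _ _ e, of xl] lr x by auto
    then show ?thesis by auto
  qed
  then obtain d2 where d2: "d2 > 0" "\<forall>y\<in>{xl..xr}. y \<le> x \<longrightarrow> \<bar>y - x\<bar> < d2 \<longrightarrow> f x - e < f y" by blast
  show ?thesis
  proof (intro exI[of _ "min d1 d2"] conjI ballI impI)
    show "min d1 d2 > 0" using d1 d2 by simp
    fix y assume y: "y \<in> {xl..xr}" "\<bar>y - x\<bar> < min d1 d2"
    then have a1: "\<bar>y - x\<bar> < d1" and a2: "\<bar>y - x\<bar> < d2" by simp_all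
    show "f x - e < f y"
    proof (cases "x \<le> y")
      case True then show ?thesis using d1(2) y(1) a1 by blast
    next
      case False then show ?thesis using d2(2) y(1) a2 by simp
    qed
  qed
qed

lemma usc:
  assumes x: "x \<in> {xl..xr}" and e: "e > 0"
  shows "\<exists>d>0. \<forall>y\<in>{xl..xr}. \<bar>y - x\<bar> < d \<longrightarrow> f y < f x + e"
proof -
  define K where "K = P0 \<inter> {p. f x + e \<le> p$2}"
  have "closed {p::pt. f x + e \<le> p$2}"
    by (intro closed_Collect_le continuous_intros)
  then have "compact K" unfolding K_def using cpt by (simp add: compact_Int_closed)
  then have "compact ((\<lambda>p. p$1) ` K)"
    by (intro compact_continuous_image linear_continuous_on) auto
  then have cl: "closed ((\<lambda>p. p$1) ` K)" by (rule compact_imp_closed)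
  have "x \<notin> (\<lambda>p. p$1) ` K"
  proof
    assume "x \<in> (\<lambda>p. p$1) ` K"
    then obtain p where p: "p \<in> P0" "f x + e \<le> p$2" "p$1 = x" by (auto simp: K_def)
    then have "p$2 \<le> f x" using f_ge[of x "p$2"] by (metis mk_eta)
    then show False using p e by simp
  qed
  moreover have "open (- ((\<lambda>p. p$1) ` K))" using cl by (simp add: open_Compl)
  ultimately have "\<exists>d>0. ball x d \<subseteq> - ((\<lambda>p. p$1) ` K)"
    unfolding open_contains_ball by blast
  then obtain d where d: "d > 0" "ball x d \<subseteq> - ((\<lambda>p. p$1) ` K)" by blast
  { fix y assume y: "y \<in> {xl..xr}" "\<bar>y - x\<bar> < d"
    have "f y < f x + e"
    proof (rule ccontr)
      assume "\<not> f y < f x + e"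
      then have "u y \<in> K" using f_mem[OF y(1)] by (auto simp: K_def)
      then have "y \<in> (\<lambda>p. p$1) ` K" by force
      moreover have "y \<in> ball x d" using y by (simp add: dist_real_def abs_minus_commute)
      ultimately show False using d by auto
    qed }
  then show ?thesis using d by auto
qed

lemma f_cont: "continuous_on {xl..xr} f"
  unfolding continuous_on_iff
proof (intro ballI allI impI)
  fix x e :: real assume x: "x \<in> {xl..xr}" and e: "e > 0"
  obtain d1 where d1: "d1 > 0" "\<forall>y\<in>{xl..xr}. \<bar>y - x\<bar> < d1 \<longrightarrow> f x - e < f y" using lsc[OF x e] by blast
  obtain d2 where d2: "d2 > 0" "\<forall>y\<in>{xl..xr}. \<bar>y - x\<bar> < d2 \<longrightarrow> f y < f x + e" using usc[OF x e] by blast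
  show "\<exists>d>0. \<forall>y\<in>{xl..xr}. dist y x < d \<longrightarrow> dist (f y) (f x) < e"
    using d1 d2 by (intro exI[of _ "min d1 d2"]) (auto simp: dist_real_def abs_less_iff)
qed

end


context dom begin

lemma delta_ex: "\<exists>\<delta>>0. \<forall>i\<in>I. \<forall>z\<in>cbox (A i) (B i). ball z \<delta> \<subseteq> interior P0"
proof -
  have "compact (\<Union>i\<in>I. cbox (A i) (B i))" using finI by (intro compact_UN) auto
  moreover have "(\<Union>i\<in>I. cbox (A i) (B i)) \<subseteq> interior P0" using sub by blast
  ultimately obtain e where "e > 0" "(\<Union>x\<in>(\<Union>i\<in>I. cbox (A i) (B i)). ball x e) \<subseteq> interior P0"
    using compact_subset_open_imp_ball_epsilon_subset[of _ "interior P0"] by blast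
  then show ?thesis by (intro exI[of _ e]) blast
qed

lemma chord:
  assumes dl: "\<forall>i\<in>I. \<forall>z\<in>cbox (A i) (B i). ball z \<delta> \<subseteq> interior P0"
    and x: "x \<in> {xl..xr}" and y: "y \<in> {xl..xr}" and d: "dist (u x) (u y) < \<delta>"
  shows "closed_segment (u x) (u y) \<subseteq> PP"
proof
  fix z assume z: "z \<in> closed_segment (u x) (u y)"
  have "z \<in> P0" using z closed_segment_subset[OF f_mem[OF x] f_mem[OF y] cvx] by blast
  moreover have "z \<notin> box (A i) (B i)" if i: "i \<in> I" for i
  proof
    assume "z \<in> box (A i) (B i)"
    then have "z \<in> cbox (A i) (B i)" using box_subset_cbox by blast
    then have b: "ball z \<delta> \<subseteq> interior P0" using dl i by blast
    have "dist z (u x) < \<delta>" using dist_in_closed_segment[OF z] d by linarith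
    then have "u x \<in> ball z \<delta>" by (simp add: dist_commute)
    then show False using b u_not_int[OF x] by blast
  qed
  ultimately show "z \<in> PP" unfolding PP_def by blast
qed

lemma chain:
  assumes dl: "\<forall>i\<in>I. \<forall>z\<in>cbox (A i) (B i). ball z \<delta> \<subseteq> interior P0" and dpos: "\<delta> > 0"
    and x1: "xl \<le> x1" and x12: "x1 \<le> x2" and x2: "x2 \<le> xr"
    and mono: "(\<forall>y z. x1 \<le> y \<longrightarrow> y \<le> z \<longrightarrow> z \<le> x2 \<longrightarrow> f y \<le> f z) \<or>
               (\<forall>y z. x1 \<le> y \<longrightarrow> y \<le> z \<longrightarrow> z \<le> x2 \<longrightarrow> f z \<le> f y)"
  shows "\<exists>ps. polygonal_path PP (u x1) (u x2) ps \<and> path_len ps \<le> (x2 - x1) + \<bar>f x2 - f x1\<bar>"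
proof -
  have "uniformly_continuous_on {xl..xr} f" by (rule compact_uniformly_continuous[OF f_cont compact_Icc])
  then obtain \<eta> where eta: "\<eta> > 0" "\<forall>y\<in>{xl..xr}. \<forall>z\<in>{xl..xr}. dist z y < \<eta> \<longrightarrow> dist (f z) (f y) < \<delta>/2"
    unfolding uniformly_continuous_on_def using dpos by (meson half_gt_zero)
  define m where "m = min \<eta> (\<delta>/2)"
  have m: "m > 0" using eta dpos by (simp add: m_def)
  define n where "n = nat \<lceil>(x2 - x1) / m\<rceil> + 1"
  have n: "n \<ge> 1" by (simp add: n_def)
  have nreal: "real n > (x2 - x1) / m" unfolding n_def by linarith
  define h where "h = (x2 - x1) / n"
  have h0: "h \<ge> 0" using x12 by (simp add: h_def)
  have hm: "h < m"
  proof -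
    have "x2 - x1 < m * n" using nreal m by (simp add: divide_less_eq mult.commute)
    then show ?thesis using n by (simp add: h_def divide_less_eq mult.commute)
  qed
  define \<xi> where "\<xi> k = x1 + real k * h" for k
  have \<xi>n: "\<xi> n = x2" using n by (simp add: \<xi>_def h_def)
  have \<xi>0: "\<xi> 0 = x1" by (simp add: \<xi>_def)
  have \<xi>mono: "\<xi> k \<le> \<xi> k'" if "k \<le> k'" for k k' using that h0 by (simp add: \<xi>_def mult_right_mono)
  have \<xi>in: "x1 \<le> \<xi> k \<and> \<xi> k \<le> x2" if "k \<le> n" for k
    using \<xi>mono[of 0 k] \<xi>mono[of k n] that \<xi>0 \<xi>n by auto
  have \<xi>I: "\<xi> k \<in> {xl..xr}" if "k \<le> n" for k using \<xi>in[OF that] x1 x2 by auto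
  have \<xi>S: "\<xi> (Suc k) - \<xi> k = h" for k by (simp add: \<xi>_def algebra_simps)
  have step: "dist (u (\<xi> k)) (u (\<xi> (Suc k))) \<le> h + \<bar>f (\<xi> (Suc k)) - f (\<xi> k)\<bar>
      \<and> dist (u (\<xi> k)) (u (\<xi> (Suc k))) < \<delta>" if k: "k < n" for k
  proof -
    have a: "dist (u (\<xi> k)) (u (\<xi> (Suc k))) \<le> h + \<bar>f (\<xi> (Suc k)) - f (\<xi> k)\<bar>"
      using dist_le_l1[of "u (\<xi> k)" "u (\<xi> (Suc k))"] \<xi>S[of k] h0 by (simp add: abs_minus_commute)
    have "dist (\<xi> (Suc k)) (\<xi> k) < \<eta>" using \<xi>S[of k] h0 hm by (simp add: dist_real_def m_def)
    then have "\<bar>f (\<xi> (Suc k)) - f (\<xi> k)\<bar> < \<delta>/2" using eta(2) \<xi>I[of k] \<xi>I[of "Suc k"] k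
      by (simp add: dist_real_def)
    moreover have "h < \<delta>/2" using hm by (simp add: m_def)
    ultimately show ?thesis using a by linarith
  qed
  define ps where "ps = map (\<lambda>k. u (\<xi> k)) [0..<Suc n]"
  have len: "length ps = Suc n" by (simp add: ps_def)
  have nth: "ps ! k = u (\<xi> k)" if "k \<le> n" for k using that by (simp add: ps_def nth_map_upt del: upt_Suc)
  have pp: "polygonal_path PP (u x1) (u x2) ps"
    unfolding polygonal_path_def
  proof (intro conjI allI impI)
    show "ps \<noteq> []" using len by auto
    have "ps \<noteq> []" using len by auto
    then show "hd ps = u x1" using nth[of 0] \<xi>0 hd_conv_nth[of ps] by simp
    show "last ps = u x2" using nth[of n] \<xi>n len last_conv_nth[OF \<open>ps \<noteq> []\<close>] by simp
    fix i assume "i < length ps - 1"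
    then have i: "i < n" using len by simp
    show "closed_segment (ps ! i) (ps ! Suc i) \<subseteq> PP"
      using nth[of i] nth[of "Suc i"] i chord[OF dl \<xi>I[of i] \<xi>I[of "Suc i"]] step[OF i] by simp
  qed
  have "path_len ps = (\<Sum>i<n. dist (u (\<xi> i)) (u (\<xi> (Suc i))))"
    unfolding path_len_def len using nth by (intro sum.cong) auto
  also have "\<dots> \<le> (\<Sum>i<n. h + \<bar>f (\<xi> (Suc i)) - f (\<xi> i)\<bar>)"
    using step by (intro sum_mono) auto
  also have "\<dots> = n * h + (\<Sum>i<n. \<bar>f (\<xi> (Suc i)) - f (\<xi> i)\<bar>)"
    by (simp add: sum.distrib)
  also have "n * h = x2 - x1" using n by (simp add: h_def)
  also have "(\<Sum>i<n. \<bar>f (\<xi> (Suc i)) - f (\<xi> i)\<bar>) = \<bar>f x2 - f x1\<bar>"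
    using mono
  proof
    assume inc: "\<forall>y z. x1 \<le> y \<longrightarrow> y \<le> z \<longrightarrow> z \<le> x2 \<longrightarrow> f y \<le> f z"
    have "(\<Sum>i<n. \<bar>f (\<xi> (Suc i)) - f (\<xi> i)\<bar>) = (\<Sum>i<n. f (\<xi> (Suc i)) - f (\<xi> i))"
    proof (intro sum.cong refl)
      fix i assume "i \<in> {..<n}"
      then have "f (\<xi> i) \<le> f (\<xi> (Suc i))" using inc \<xi>in[of i] \<xi>in[of "Suc i"] \<xi>mono[of i "Suc i"] by auto
      then show "\<bar>f (\<xi> (Suc i)) - f (\<xi> i)\<bar> = f (\<xi> (Suc i)) - f (\<xi> i)" by simp
    qed
    also have "\<dots> = f x2 - f x1" using sum_lessThan_telescope[of "\<lambda>i. f (\<xi> i)" n] \<xi>0 \<xi>n by simp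
    also have "\<dots> = \<bar>f x2 - f x1\<bar>" using inc x12 by auto
    finally show ?thesis .
  next
    assume dec: "\<forall>y z. x1 \<le> y \<longrightarrow> y \<le> z \<longrightarrow> z \<le> x2 \<longrightarrow> f z \<le> f y"
    have "(\<Sum>i<n. \<bar>f (\<xi> (Suc i)) - f (\<xi> i)\<bar>) = (\<Sum>i<n. f (\<xi> i) - f (\<xi> (Suc i)))"
    proof (intro sum.cong refl)
      fix i assume "i \<in> {..<n}"
      then have "f (\<xi> (Suc i)) \<le> f (\<xi> i)" using dec \<xi>in[of i] \<xi>in[of "Suc i"] \<xi>mono[of i "Suc i"] by auto
      then show "\<bar>f (\<xi> (Suc i)) - f (\<xi> i)\<bar> = f (\<xi> i) - f (\<xi> (Suc i))" by simp
    qed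
    also have "\<dots> = f x1 - f x2" using sum_lessThan_telescope'[of "\<lambda>i. f (\<xi> i)" n] \<xi>0 \<xi>n by simp
    also have "\<dots> = \<bar>f x2 - f x1\<bar>" using dec x12 by auto
    finally show ?thesis .
  qed
  finally show ?thesis using pp by blast
qed

end


context dom begin

lemma on_edge:
  assumes i: "i \<in> I" and w: "w \<in> cbox (A i) (B i)" and e: "w$1 = A i$1 \<or> w$2 = A i$2"
  shows "w \<in> PP"
proof -
  have "w \<in> P0" using sub[OF i] w interior_subset by blast
  moreover have "w \<notin> box (A i) (B i)" using e unfolding mem_box_cart by (metis less_irrefl)
  moreover have "w \<notin> box (A j) (B j)" if "j \<in> I" "j \<noteq> i" for j
    using disj[OF i that(1)] that(2) w box_subset_cbox by blast
  ultimately show ?thesis unfolding PP_def by blast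
qed

lemma stair_aux:
  "\<forall>p. p \<in> PP \<longrightarrow> card {i\<in>I. p$2 < B i $2} = n \<longrightarrow>
     (\<exists>x ps. x \<in> {xl..xr} \<and> polygonal_path PP p (u x) ps \<and> path_len ps \<le> (p$1 - x) + (f x - p$2))"
proof (induction n rule: less_induct)
  case (less n)
  show ?case
  proof (intro allI impI)
    fix p assume pP: "p \<in> PP" and cn: "card {i\<in>I. p$2 < B i $2} = n"
    define x0 where "x0 = p$1"
    have p0: "p \<in> P0" using pP PP_P0 by blast
    have x0: "x0 \<in> {xl..xr}" using P0_x[OF p0] by (simp add: x0_def)
    have pf: "p$2 \<le> f x0" using f_ge[of x0 "p$2"] p0 by (simp add: x0_def mk_eta)
    have pmk: "p = mk x0 (p$2)" by (simp add: x0_def mk_eta)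
    define seg where "seg = closed_segment p (u x0)"
    have segP0: "seg \<subseteq> P0" unfolding seg_def using closed_segment_subset[OF p0 f_mem[OF x0] cvx] .
    define J where "J = {i\<in>I. seg \<inter> box (A i) (B i) \<noteq> {}}"
    have finJ: "finite J" using finI by (simp add: J_def)
    show "\<exists>x ps. x \<in> {xl..xr} \<and> polygonal_path PP p (u x) ps \<and> path_len ps \<le> (p$1 - x) + (f x - p$2)"
    proof (cases "J = {}")
      case True
      have "seg \<subseteq> PP" using True segP0 unfolding J_def PP_def by blast
      then have "polygonal_path PP p (u x0) [p, u x0] \<and> path_len [p, u x0] = dist p (u x0)"
        unfolding seg_def by (rule pp_seg)
      moreover have "dist p (u x0) = f x0 - p$2" using pf
        by (subst pmk) (simp add: u_def dist_vert)
      ultimately show ?thesis using x0 by (intro exI[of _ x0] exI[of _ "[p, u x0]"]) (simp add: x0_def)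
    next
      case False
      define r where "r = Min ((\<lambda>j. A j $2) ` J)"
      have "r \<in> (\<lambda>j. A j $2) ` J" unfolding r_def using finJ False by (intro Min_in) auto
      then obtain i where iJ: "i \<in> J" and ri: "r = A i $2" by blast
      have rmin: "\<And>j. j \<in> J \<Longrightarrow> r \<le> A j $2" unfolding r_def using finJ by auto
      have iI: "i \<in> I" using iJ by (simp add: J_def)
      obtain z where z: "z \<in> seg" "z \<in> box (A i) (B i)" using iJ by (auto simp: J_def)
      have z1: "z$1 = x0" using seg_const[OF z(1)[unfolded seg_def], of 1 x0] by (simp add: x0_def)
      have z2: "p$2 \<le> z$2 \<and> z$2 \<le> f x0" using seg_between[OF z(1)[unfolded seg_def], of 2] pf by simp
      have zb: "A i$1 < z$1" "z$1 < B i$1" "A i$2 < z$2" "z$2 < B i$2" using z(2) by (auto simp: mem_box_cart)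
      have "p \<notin> box (A i) (B i)" using pP iI unfolding PP_def by blast
      then have "\<not> (A i$2 < p$2 \<and> p$2 < B i$2)" using zb z1 by (auto simp: mem_box_cart forall_2 x0_def)
      then have pr: "p$2 \<le> r" using z2 zb ri by linarith
      have rf: "r \<le> f x0" using z2 zb ri by linarith
      define p1 where "p1 = mk x0 r"
      define p2 where "p2 = mk (A i$1) r"
      define p3 where "p3 = mk (A i$1) (B i$2)"
      have AB: "A i$1 < B i$1" "A i$2 < B i$2" using AB1[OF iI] AB2[OF iI] by auto
      have p1c: "p1 \<in> cbox (A i) (B i)" using zb z1 ri AB by (auto simp: p1_def mem_box_cart forall_2)
      have p2c: "p2 \<in> cbox (A i) (B i)" using zb z1 ri AB by (auto simp: p2_def mem_box_cart forall_2)
      have p3c: "p3 \<in> cbox (A i) (B i)" using zb z1 ri AB by (auto simp: p3_def mem_box_cart forall_2)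
      have p1seg: "p1 \<in> seg" unfolding seg_def p1_def using vert_in_seg[of p "u x0" r] pr rf
        by (simp add: x0_def)
      have s1: "closed_segment p p1 \<subseteq> PP"
      proof
        fix w assume w: "w \<in> closed_segment p p1"
        have pseg: "p \<in> seg" by (simp add: seg_def)
        have cs: "convex seg" by (simp add: seg_def)
        have wseg: "w \<in> seg" using w closed_segment_subset[OF pseg p1seg cs] by blast
        have w2: "w$2 \<le> r" using seg_between[OF w, of 2] pr by (simp add: p1_def)
        have "w \<notin> box (A j) (B j)" if j: "j \<in> I" for j
        proof
          assume wb: "w \<in> box (A j) (B j)"
          then have "j \<in> J" using wseg j by (auto simp: J_def)
          then have "r \<le> A j $2" by (rule rmin)
          moreover have "A j$2 < w$2" using wb by (auto simp: mem_box_cart)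
          ultimately show False using w2 by simp
        qed
        then show "w \<in> PP" using wseg segP0 unfolding PP_def by blast
      qed
      have s2: "closed_segment p1 p2 \<subseteq> PP"
      proof
        fix w assume w: "w \<in> closed_segment p1 p2"
        have "w \<in> cbox (A i) (B i)" using w closed_segment_subset[OF p1c p2c convex_box(1)] by blast
        moreover have "w$2 = A i$2" using seg_const[OF w, of 2 r] ri by (simp add: p1_def p2_def)
        ultimately show "w \<in> PP" using on_edge[OF iI] by blast
      qed
      have s3: "closed_segment p2 p3 \<subseteq> PP"
      proof
        fix w assume w: "w \<in> closed_segment p2 p3"
        have "w \<in> cbox (A i) (B i)" using w closed_segment_subset[OF p2c p3c convex_box(1)] by blast
        moreover have "w$1 = A i$1" using seg_const[OF w, of 1 "A i$1"] by (simp add: p2_def p3_def)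
        ultimately show "w \<in> PP" using on_edge[OF iI] by blast
      qed
      have p3P: "p3 \<in> PP" using on_edge[OF iI p3c] by (simp add: p3_def)
      have sub3: "{j\<in>I. p3$2 < B j $2} \<subset> {j\<in>I. p$2 < B j $2}"
      proof
        show "{j\<in>I. p3$2 < B j $2} \<subseteq> {j\<in>I. p$2 < B j $2}" using pr AB ri by (auto simp: p3_def)
        have "i \<in> {j\<in>I. p$2 < B j $2}" using iI pr AB ri by auto
        moreover have "i \<notin> {j\<in>I. p3$2 < B j $2}" by (simp add: p3_def)
        ultimately show "{j\<in>I. p3$2 < B j $2} \<noteq> {j\<in>I. p$2 < B j $2}" by blast
      qed
      have "card {j\<in>I. p3$2 < B j $2} < n" using psubset_card_mono[OF _ sub3] finI cn by simp
      then obtain x ps where ih: "x \<in> {xl..xr}" "polygonal_path PP p3 (u x) ps"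
          "path_len ps \<le> (p3$1 - x) + (f x - p3$2)"
        using less.IH p3P by blast
      have pre: "polygonal_path PP p p3 [p, p1, p2, p3]"
        using s1 s2 s3 by (simp add: pp_cons pp_single)
      have lpre: "path_len [p, p1, p2, p3] = (r - p$2) + (x0 - A i$1) + (B i$2 - r)"
      proof -
        have "dist p p1 = r - p$2" using pr by (subst pmk) (simp add: p1_def dist_vert)
        moreover have "dist p1 p2 = x0 - A i$1" using zb z1 by (simp add: p1_def p2_def dist_horiz)
        moreover have "dist p2 p3 = B i$2 - r" using AB ri by (simp add: p2_def p3_def dist_vert)
        ultimately show ?thesis by (simp add: len_cons len_single)
      qed
      from pp_append[OF pre ih(2)] lpre ih(3) ih(1) show ?thesis
        by (intro exI[of _ x] exI[of _ "[p, p1, p2, p3] @ tl ps"]) (simp add: p3_def x0_def)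
    qed
  qed
qed

lemma stair: "p \<in> PP \<Longrightarrow>
   \<exists>x ps. x \<in> {xl..xr} \<and> polygonal_path PP p (u x) ps \<and> path_len ps \<le> (p$1 - x) + (f x - p$2)"
  using stair_aux by blast

end


context dom begin

lemma PP_ne: "u xl \<in> PP" using u_PP[of xl] lr by simp

lemma path_len_nonneg: "path_len ps \<ge> 0"
  unfolding path_len_def by (intro sum_nonneg) auto

lemma diam_upper: assumes "a \<in> PP" "b \<in> PP" shows "dist a b \<le> diam2 PP"
proof -
  obtain M where M: "\<forall>x\<in>P0. norm x \<le> M" using compact_imp_bounded[OF cpt] by (auto simp: bounded_iff)
  have "bdd_above {dist s t | s t. s \<in> PP \<and> t \<in> PP}"
  proof (rule bdd_aboveI[where M="2*M"])
    fix d assume "d \<in> {dist s t | s t. s \<in> PP \<and> t \<in> PP}"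
    then obtain s t where "d = dist s t" "s \<in> P0" "t \<in> P0" using PP_P0 by blast
    then show "d \<le> 2*M" using M norm_triangle_ineq4[of s t] by (simp add: dist_norm) (smt (verit))
  qed
  then show ?thesis unfolding diam2_def using assms by (intro cSup_upper) blast+
qed

lemma diam_pos: "diam2 PP > 0"
proof -
  have "\<bar>xl - xr\<bar> \<le> dist (u xl) (u xr)" using comp_le_dist[where p="u xl" and q="u xr" and i=1] by simp
  moreover have "dist (u xl) (u xr) \<le> diam2 PP" using u_PP[of xl] u_PP[of xr] lr by (intro diam_upper) auto
  ultimately show ?thesis using lr by simp
qed

lemma stair_bound: "\<bar>p$1 - q$1\<bar> + \<bar>p$2 - q$2\<bar> \<le> 2 * dist p (q::pt)"
  using comp_le_dist[where p=p and q=q and i=1] comp_le_dist[where p=p and q=q and i=2] by simp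

lemma connect:
  assumes s: "s \<in> PP"
  shows "\<exists>ps. polygonal_path PP s pT ps \<and> path_len ps \<le> 4 * diam2 PP"
proof -
  obtain \<delta> where dl: "\<delta> > 0" "\<forall>i\<in>I. \<forall>z\<in>cbox (A i) (B i). ball z \<delta> \<subseteq> interior P0"
    using delta_ex by blast
  obtain x ps where st: "x \<in> {xl..xr}" "polygonal_path PP s (u x) ps" "path_len ps \<le> (s$1 - x) + (f x - s$2)"
    using stair[OF s] by blast
  have l1: "path_len ps \<le> 2 * diam2 PP"
  proof -
    have "(s$1 - x) + (f x - s$2) \<le> \<bar>s$1 - (u x)$1\<bar> + \<bar>s$2 - (u x)$2\<bar>" by simp
    also have "\<dots> \<le> 2 * dist s (u x)" by (rule stair_bound)
    also have "\<dots> \<le> 2 * diam2 PP" using diam_upper[OF s u_PP[OF st(1)]] by simp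
    finally show ?thesis using st(3) by simp
  qed
  have "\<exists>qs. polygonal_path PP (u x) pT qs \<and> path_len qs \<le> 2 * diam2 PP"
  proof -
    have xT': "xl \<le> pT$1" "pT$1 \<le> xr" using xT by auto
    have "\<exists>qs. polygonal_path PP (u x) (u (pT$1)) qs \<and> path_len qs \<le> \<bar>pT$1 - x\<bar> + \<bar>f (pT$1) - f x\<bar>"
    proof (cases "x \<le> pT$1")
      case True
      have "(\<forall>y z. x \<le> y \<longrightarrow> y \<le> z \<longrightarrow> z \<le> pT$1 \<longrightarrow> f y \<le> f z)"
        using f_mono_left st(1) by auto
      then show ?thesis using chain[OF dl(2) dl(1), of x "pT$1"] st(1) True xT' by auto
    next
      case False
      have "(\<forall>y z. pT$1 \<le> y \<longrightarrow> y \<le> z \<longrightarrow> z \<le> x \<longrightarrow> f z \<le> f y)"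
        using f_mono_right st(1) by auto
      then obtain qs where qs: "polygonal_path PP (u (pT$1)) (u x) qs" "path_len qs \<le> (x - pT$1) + \<bar>f x - f (pT$1)\<bar>"
        using chain[OF dl(2) dl(1), of "pT$1" x] st(1) False xT' by auto
      show ?thesis using pp_rev[OF qs(1)] qs(2) False by (intro exI[of _ "rev qs"]) (simp add: abs_minus_commute)
    qed
    then obtain qs where qs: "polygonal_path PP (u x) pT qs" "path_len qs \<le> \<bar>pT$1 - x\<bar> + \<bar>f (pT$1) - f x\<bar>"
      using uT by auto
    have "\<bar>pT$1 - x\<bar> + \<bar>f (pT$1) - f x\<bar> = \<bar>pT$1 - (u x)$1\<bar> + \<bar>pT$2 - (u x)$2\<bar>" using fT by simp
    also have "\<dots> \<le> 2 * dist pT (u x)" by (rule stair_bound)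
    also have "\<dots> \<le> 2 * diam2 PP" using diam_upper[OF u_PP[OF xT] u_PP[OF st(1)]] uT by simp
    finally show ?thesis using qs by auto
  qed
  then obtain qs where qs: "polygonal_path PP (u x) pT qs" "path_len qs \<le> 2 * diam2 PP" by blast
  from pp_append[OF st(2) qs(1)] l1 qs(2) show ?thesis by (intro exI[of _ "ps @ tl qs"]) simp
qed

lemma connect2:
  assumes s: "s \<in> PP" and t: "t \<in> PP"
  shows "geod PP s t \<le> 8 * diam2 PP"
proof -
  obtain ps where ps: "polygonal_path PP s pT ps" "path_len ps \<le> 4 * diam2 PP" using connect[OF s] by blast
  obtain qs where qs: "polygonal_path PP t pT qs" "path_len qs \<le> 4 * diam2 PP" using connect[OF t] by blast
  note r = pp_rev[OF qs(1)]
  note a = pp_append[OF ps(1) r[THEN conjunct1]]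
  have "path_len (ps @ tl (rev qs)) \<le> 8 * diam2 PP" using a r ps(2) qs(2) by simp
  moreover have "geod PP s t \<le> path_len (ps @ tl (rev qs))"
    unfolding geod_def
  proof (rule cInf_lower)
    show "path_len (ps @ tl (rev qs)) \<in> {path_len ps |ps. polygonal_path PP s t ps}" using a by blast
    show "bdd_below {path_len ps |ps. polygonal_path PP s t ps}"
      using path_len_nonneg by (intro bdd_belowI[where m=0]) auto
  qed
  ultimately show ?thesis by simp
qed

lemma rho_le: "rho PP \<le> 8"
proof -
  have "diamg PP \<le> 8 * diam2 PP"
    unfolding diamg_def using PP_ne connect2 by (intro cSup_least) auto
  then show ?thesis unfolding rho_def using diam_pos by (simp add: divide_le_eq)
qed

end


theorem proposition2:
  shows "\<exists>C>0. \<forall>(h::nat) P0 (H :: nat \<Rightarrow> pt set).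
           in_class_C h P0 H \<and> (\<forall>i\<in>{1..h}. axis_rectangle (H i)) \<longrightarrow>
           rho (polygonal_domain P0 h H) \<le> C"
proof (intro exI[of _ 8] conjI allI impI)
  show "(8::real) > 0" by simp
  fix h :: nat and P0 :: "pt set" and H :: "nat \<Rightarrow> pt set"
  assume asm: "in_class_C h P0 H \<and> (\<forall>i\<in>{1..h}. axis_rectangle (H i))"
  have "\<forall>i\<in>{1..h}. \<exists>ab. fst ab $1 < snd ab $1 \<and> fst ab $2 < snd ab $2 \<and> H i = cbox (fst ab) (snd ab)"
    using asm unfolding axis_rectangle_def by force
  then obtain g where g: "\<forall>i\<in>{1..h}. fst (g i) $1 < snd (g i) $1 \<and> fst (g i) $2 < snd (g i) $2 \<and> H i = cbox (fst (g i)) (snd (g i))"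
    by metis
  define A where "A i = fst (g i)" for i
  define B where "B i = snd (g i)" for i
  have HAB: "\<And>i. i \<in> {1..h} \<Longrightarrow> H i = cbox (A i) (B i)" using g by (simp add: A_def B_def)
  obtain V where V: "finite V" "P0 = convex hull V" and int: "interior P0 \<noteq> {}"
    using asm unfolding in_class_C_def convex_polygon_def by blast
  have cpt: "compact P0" using V by (simp add: finite_imp_compact_convex_hull)
  have cvx: "convex P0" using V by simp
  have ne: "P0 \<noteq> {}" using int interior_subset by blast
  have c1: "continuous_on P0 (\<lambda>p::pt. p$1)" by (intro linear_continuous_on) auto
  have c2: "continuous_on P0 (\<lambda>p::pt. p$2)" by (intro linear_continuous_on) auto
  obtain pl where pl: "pl \<in> P0" "\<And>p. p\<in>P0 \<Longrightarrow> pl$1 \<le> p$1" using continuous_attains_inf[OF cpt ne c1] by blast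
  obtain pr where pr: "pr \<in> P0" "\<And>p. p\<in>P0 \<Longrightarrow> p$1 \<le> pr$1" using continuous_attains_sup[OF cpt ne c1] by blast
  obtain pT where pT: "pT \<in> P0" "\<And>p. p\<in>P0 \<Longrightarrow> p$2 \<le> pT$2" using continuous_attains_sup[OF cpt ne c2] by blast
  obtain z where "z \<in> interior P0" using int by blast
  then obtain e where e: "e > 0" "ball z e \<subseteq> P0" by (auto simp: mem_interior)
  have "dist z (mk (z$1 + e/2) (z$2)) = e/2"
    using dist_horiz[of "z$1" "z$2" "z$1 + e/2"] e by (simp add: mk_eta)
  then have "mk (z$1 + e/2) (z$2) \<in> P0" using e by auto
  then have "z$1 + e/2 \<le> pr$1" using pr(2) by fastforce
  moreover have "z \<in> P0" using e by (simp add: subset_iff)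
  then have "pl$1 \<le> z$1" using pl(2) by blast
  ultimately have lr: "pl$1 < pr$1" using e by simp
  have inC: "\<forall>i\<in>{1..h}. convex_polygon (H i) \<and> H i \<subseteq> interior P0"
    "\<forall>i\<in>{1..h}. \<forall>j\<in>{1..h}. i \<noteq> j \<longrightarrow> H i \<inter> H j = {}"
    using asm unfolding in_class_C_def by auto
  interpret D: dom P0 "{1..h}" A B pl pr pT
  proof
    show "finite {1..h}" by simp
    show "compact P0" "convex P0" by (fact cpt, fact cvx)
    show "\<And>i. i \<in> {1..h} \<Longrightarrow> cbox (A i) (B i) \<subseteq> interior P0" using inC HAB by auto
    show "\<And>i j. i \<in> {1..h} \<Longrightarrow> j \<in> {1..h} \<Longrightarrow> i \<noteq> j \<Longrightarrow> cbox (A i) (B i) \<inter> cbox (A j) (B j) = {}"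
      using inC HAB by metis
    show "\<And>i. i \<in> {1..h} \<Longrightarrow> A i $1 < B i $1" "\<And>i. i \<in> {1..h} \<Longrightarrow> A i $2 < B i $2"
      using g by (auto simp: A_def B_def)
  qed (use pl pr pT lr in auto)
  have "polygonal_domain P0 h H = D.PP"
    unfolding polygonal_domain_def D.PP_def using HAB by (auto simp: interior_cbox)
  then show "rho (polygonal_domain P0 h H) \<le> 8" using D.rho_le by simp
qed


end
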